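(* Let $\alpha_n,\alpha\in\mathfrak g$ with $\alpha_n\to\alpha$, and suppose the sequence of flat connections $\alpha_n\,d\theta$ is non-degenerating (see context). Then the Poincaré constants $C_{\alpha_n}$ are uniformly bounded for all sufficiently large $n$.
   Context: $G$ is a compact Lie group with Lie algebra $\mathfrak g$, acting through an orthogonal representation on $\mathbb R^K$, so every $\xi\in\mathfrak g$ is identified with a skew-symmetric $K\times K$ matrix. For $\alpha\in\mathfrak g$, $\partial_{\theta,\alpha}u:=\partial_\theta u+\alpha u$ for $u\in W^{2,2}(S^1,\mathbb R^K)$. The Poincaré constant $C_\alpha$ is the smallest constant with $\int_{S^1}|\partial_{\theta,\alpha}u|^2\le C_\alpha\int_{S^1}|\partial^2_{\theta,\alpha}u|^2$ for all $u\in W^{2,2}(S^1,\mathbb R^K)$ (it is finite). A sequence $\alpha_n\,d\theta$ with $\alpha_n\to\alpha$ is called non-degenerating if there exists $N$ such that every $u\in W^{2,2}(S^1,\mathbb R^K)$ with $\partial_{\theta,\alpha}u=0$ also satisfies $\partial_{\theta,\alpha_n}u=0$ for all $n\ge N$; otherwise it is called degenerating. *)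

theory Defs
  imports "HOL-Analysis.Analysis"
begin

text \<open>S^1 is parametrised by \<theta> in [0, 2 pi]; maps S^1 -> R^K are 2 pi-periodic maps
  real => real^'k.  Lie algebra elements are K x K skew-symmetric real matrices.\<close>

definition skew :: "real^'k^'k \<Rightarrow> bool" where
  "skew A \<longleftrightarrow> transpose A = - A"

text \<open>W^{2,2}(S^1,R^K), via the continuously differentiable representative:
  u is 2 pi-periodic and differentiable with derivative u1, u1 is absolutely continuous
  with weak derivative u2 (locally Lebesgue integrable), and u2 is in L^2 on one period.\<close>

definition W22 :: "(real \<Rightarrow> real^'k) \<Rightarrow> (real \<Rightarrow> real^'k) \<Rightarrow> (real \<Rightarrow> real^'k) \<Rightarrow> bool" where
  "W22 u u1 u2 \<longleftrightarrow>
     (\<forall>t. u (t + 2*pi) = u t) \<and>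
     (\<forall>t. (u has_vector_derivative u1 t) (at t)) \<and>
     (\<forall>a b. a \<le> b \<longrightarrow> u2 absolutely_integrable_on {a..b} \<and>
                         u1 b - u1 a = integral {a..b} u2) \<and>
     (\<lambda>t. (norm (u2 t))\<^sup>2) integrable_on {0..2*pi}"

definition cov_d1 :: "real^'k^'k \<Rightarrow> (real \<Rightarrow> real^'k) \<Rightarrow> (real \<Rightarrow> real^'k) \<Rightarrow> real \<Rightarrow> real^'k" where
  "cov_d1 \<alpha> u u1 = (\<lambda>t. u1 t + \<alpha> *v u t)"

definition cov_d2 :: "real^'k^'k \<Rightarrow> (real \<Rightarrow> real^'k) \<Rightarrow> (real \<Rightarrow> real^'k) \<Rightarrow> (real \<Rightarrow> real^'k) \<Rightarrow> real \<Rightarrow> real^'k" where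
  "cov_d2 \<alpha> u u1 u2 = (\<lambda>t. (u2 t + \<alpha> *v u1 t) + \<alpha> *v (u1 t + \<alpha> *v u t))"

definition poincare_const :: "real^'k^'k \<Rightarrow> real" where
  "poincare_const \<alpha> = Inf {C. \<forall>u u1 u2. W22 u u1 u2 \<longrightarrow>
      integral {0..2*pi} (\<lambda>t. (norm (cov_d1 \<alpha> u u1 t))\<^sup>2)
        \<le> C * integral {0..2*pi} (\<lambda>t. (norm (cov_d2 \<alpha> u u1 u2 t))\<^sup>2)}"

definition non_degenerating :: "(nat \<Rightarrow> real^'k^'k) \<Rightarrow> real^'k^'k \<Rightarrow> bool" where
  "non_degenerating as \<alpha> \<longleftrightarrow>
     (\<exists>N. \<forall>u u1 u2. W22 u u1 u2 \<and> (\<forall>t. cov_d1 \<alpha> u u1 t = 0) \<longrightarrow>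
            (\<forall>n\<ge>N. \<forall>t. cov_d1 (as n) u u1 t = 0))"

end

theory Submission
  imports Defs
begin

typedef (overloaded) 'k mat = "{f :: real^'k::finite \<Rightarrow> real^'k. bounded_linear f}"
  morphisms ap Mat
  by (blast intro: bounded_linear_ident)

setup_lifting type_definition_mat

lemma mat_eqI: "(\<And>x. ap X x = ap Y x) \<Longrightarrow> X = Y"
  by transfer auto

lemma bounded_linear_ap[simp, intro]: "bounded_linear (ap X)"
  using ap by auto

instantiation mat :: (finite) real_normed_vector
begin

lift_definition norm_mat :: "'a mat \<Rightarrow> real" is onorm .
lift_definition minus_mat :: "'a mat \<Rightarrow> 'a mat \<Rightarrow> 'a mat"
  is "\<lambda>f g x. f x - g x" by (rule bounded_linear_sub)
definition dist_mat :: "'a mat \<Rightarrow> 'a mat \<Rightarrow> real" where "dist_mat a b = norm (a - b)"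
definition uniformity_mat_def [code del]:
  "(uniformity :: ('a mat \<times> 'a mat) filter) = (INF e\<in>{0 <..}. principal {(x, y). dist x y < e})"
definition open_mat :: "'a mat set \<Rightarrow> bool"
  where [code del]: "open_mat S = (\<forall>x\<in>S. \<forall>\<^sub>F (x', y) in uniformity. x' = x \<longrightarrow> y \<in> S)"
lift_definition uminus_mat :: "'a mat \<Rightarrow> 'a mat" is "\<lambda>f x. - f x"
  by (rule bounded_linear_minus)
lift_definition zero_mat :: "'a mat" is "\<lambda>x. 0" by (rule bounded_linear_zero)
lift_definition plus_mat :: "'a mat \<Rightarrow> 'a mat \<Rightarrow> 'a mat" is "\<lambda>f g x. f x + g x"
  by (metis bounded_linear_add)
lift_definition scaleR_mat :: "real \<Rightarrow> 'a mat \<Rightarrow> 'a mat" is "\<lambda>r f x. r *\<^sub>R f x"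
  by (metis bounded_linear_compose bounded_linear_scaleR_right)
definition sgn_mat :: "'a mat \<Rightarrow> 'a mat" where "sgn_mat x = scaleR (inverse (norm x)) x"

instance
  apply standard
  unfolding dist_mat_def open_mat_def sgn_mat_def uniformity_mat_def
  apply (rule refl | (transfer, force simp: onorm_triangle onorm_scaleR onorm_eq_0 algebra_simps))+
  done
end

instantiation mat :: (finite) real_normed_algebra_1
begin
lift_definition times_mat :: "'a mat \<Rightarrow> 'a mat \<Rightarrow> 'a mat" is "\<lambda>f g x. f (g x)"
  by (rule bounded_linear_compose)
lift_definition one_mat :: "'a mat" is "\<lambda>x. x" by (rule bounded_linear_ident)
instance
proof
  fix a b c :: "'a mat" and r :: real
  show "a * b * c = a * (b * c)" by transfer auto
  show "(a + b) * c = a * c + b * c" by transfer auto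
  show "a * (b + c) = a * b + a * c"
    by transfer (auto simp: linear_add bounded_linear.linear)
  show "r *\<^sub>R a * b = r *\<^sub>R (a * b)" by transfer auto
  show "a * r *\<^sub>R b = r *\<^sub>R (a * b)"
    by transfer (auto simp: linear_scale bounded_linear.linear)
  show "1 * a = a" by transfer auto
  show "a * 1 = a" by transfer auto
  show "(0::'a mat) \<noteq> 1"
  proof
    assume "(0::'a mat) = 1"
    then have "ap (0::'a mat) 1 = ap 1 1" by simp
    then show False by (simp add: zero_mat.rep_eq one_mat.rep_eq)
  qed
  show "norm (a * b) \<le> norm a * norm b" apply transfer
    subgoal for a b using onorm_compose[of a b] by (simp add: comp_def) done
  show "norm (1::'a mat) = 1" by transfer (rule onorm_id)
qed
end

lemma ap_add[simp]: "ap (X + Y) x = ap X x + ap Y x" by transfer auto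
lemma ap_diff[simp]: "ap (X - Y) x = ap X x - ap Y x" by transfer auto
lemma ap_minus[simp]: "ap (- X) x = - ap X x" by transfer auto
lemma ap_scaleR[simp]: "ap (r *\<^sub>R X) x = r *\<^sub>R ap X x" by transfer auto
lemma ap_zero[simp]: "ap 0 x = 0" by transfer auto
lemma ap_one[simp]: "ap 1 x = x" by transfer auto
lemma ap_mult[simp]: "ap (X * Y) x = ap X (ap Y x)" by transfer auto
lemma ap_norm: "norm (ap X x) \<le> norm X * norm x" by transfer (rule onorm)
lemma ap_vadd[simp]: "ap X (x + y) = ap X x + ap X y"
  by (simp add: linear_add bounded_linear.linear)
lemma ap_vdiff[simp]: "ap X (x - y) = ap X x - ap X y"
  by (simp add: linear_diff bounded_linear.linear)
lemma ap_vscale[simp]: "ap X (r *\<^sub>R y) = r *\<^sub>R ap X y"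
  by (simp add: linear_scale bounded_linear.linear)
lemma ap_vminus[simp]: "ap X (- y) = - ap X y"
  by (simp add: linear_neg bounded_linear.linear)
lemma ap_vzero[simp]: "ap X 0 = 0"
  by (simp add: linear_0 bounded_linear.linear)

lemma bounded_bilinear_ap: "bounded_bilinear ap"
proof
  fix a a' :: "'k::finite mat" and b b' :: "real^'k" and r :: real
  show "ap (a + a') b = ap a b + ap a' b" by simp
  show "ap a (b + b') = ap a b + ap a b'" by simp
  show "ap (r *\<^sub>R a) b = r *\<^sub>R ap a b" by simp
  show "ap a (r *\<^sub>R b) = r *\<^sub>R ap a b" by simp
  show "\<exists>K. \<forall>a b. norm (ap a b) \<le> norm a * norm b * K"
    by (rule exI[of _ 1]) (simp add: ap_norm)
qed

definition toB :: "'k::finite mat \<Rightarrow> ((real^'k) \<Rightarrow>\<^sub>L (real^'k))" where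
  "toB X = Blinfun (ap X)"

lemma toB_apply: "blinfun_apply (toB X) = ap X"
  unfolding toB_def by (simp add: bounded_linear_Blinfun_apply)

lemma norm_toB: "norm (toB X) = norm X"
  unfolding norm_blinfun_def norm_mat_def by (simp add: toB_apply)

lemma toB_diff: "toB X - toB Y = toB (X - Y)"
  by (rule blinfun_eqI) (simp add: toB_apply blinfun.diff_left)

instance mat :: (finite) banach
proof
  fix X :: "nat \<Rightarrow> 'a mat"
  assume c: "Cauchy X"
  have "Cauchy (\<lambda>n. toB (X n))"
    using c unfolding Cauchy_def dist_norm by (simp add: toB_diff norm_toB)
  then obtain L where L: "(\<lambda>n. toB (X n)) \<longlonglongrightarrow> L"
    using convergent_eq_Cauchy by blast
  define Y where "Y = Mat (blinfun_apply L)"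
  have aY: "ap Y = blinfun_apply L"
    unfolding Y_def by (rule Mat_inverse) (simp add: blinfun.bounded_linear_right)
  have "toB Y = L" by (rule blinfun_eqI) (simp add: toB_apply aY)
  then have "(\<lambda>n. toB (X n) - toB Y) \<longlonglongrightarrow> 0"
    using L tendsto_diff[OF L tendsto_const[of L]] by simp
  then have "(\<lambda>n. norm (X n - Y)) \<longlonglongrightarrow> 0"
    using tendsto_norm_zero[OF \<open>(\<lambda>n. toB (X n) - toB Y) \<longlonglongrightarrow> 0\<close>]
    by (simp add: toB_diff norm_toB)
  then have "X \<longlonglongrightarrow> Y"
    using tendsto_norm_zero_iff LIM_zero_iff by blast
  then show "convergent X" unfolding convergent_def by blast
qed

definition mofm :: "real^'k::finite^'k \<Rightarrow> 'k mat" where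
  "mofm A = Mat (\<lambda>x. A *v x)"

lemma ap_mofm[simp]: "ap (mofm A) x = A *v x"
  unfolding mofm_def by (subst Mat_inverse) auto

lemma mofm_diff: "mofm A - mofm B = mofm (A - B)"
  by (rule mat_eqI) (simp add: matrix_vector_mult_diff_rdistrib)

lemma norm_mofm_le: "norm (mofm A) \<le> (\<Sum>i\<in>UNIV. \<Sum>j\<in>UNIV. \<bar>A $ i $ j\<bar>)"
proof -
  have "ap (mofm A) = (*v) A" by (rule ext) simp
  then show ?thesis unfolding norm_mat_def using onorm_le_matrix_component_sum[of A] by simp
qed

lemma norm_mat_bound: "0 \<le> b \<Longrightarrow> (\<And>x. norm (ap X x) \<le> b * norm x) \<Longrightarrow> norm X \<le> b"
  by transfer (rule onorm_bound)

definition flow :: "real^'k::finite^'k \<Rightarrow> real \<Rightarrow> 'k mat" where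
  "flow A t = exp (t *\<^sub>R mofm A)"

lemma flow_add: "flow A (s + t) = flow A s * flow A t"
  unfolding flow_def scaleR_add_left
  by (rule exp_add_commuting) (simp add: algebra_simps)

lemma flow_zero[simp]: "flow A 0 = 1"
  unfolding flow_def by simp

lemma flow_commute: "flow A s * flow A t = flow A t * flow A s"
  by (metis flow_add add.commute)

lemma flow_inv: "flow A (-t) * flow A t = 1" "flow A t * flow A (-t) = 1"
  by (metis flow_add flow_zero add.commute add.right_inverse)+

lemma flow_mofm_commute: "flow A t * mofm A = mofm A * flow A t"
  unfolding flow_def by (rule exp_times_scaleR_commute)

lemma flow_deriv_right: "(flow A has_vector_derivative flow A t * mofm A) (at t within T)"
  unfolding flow_def[abs_def] using exp_scaleR_has_vector_derivative_right[of "mofm A" t T] .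

lemma flow_deriv_left: "(flow A has_vector_derivative mofm A * flow A t) (at t within T)"
  using flow_deriv_right[of A t T] by (simp add: flow_mofm_commute)

lemma ap_flow_A: "ap (flow A t) (A *v x) = A *v ap (flow A t) x"
proof -
  have "ap (flow A t * mofm A) x = ap (mofm A * flow A t) x" by (simp add: flow_mofm_commute)
  then show ?thesis by simp
qed

lemma bl_ap_left: "bounded_linear (\<lambda>X. ap X x)"
  by (rule bounded_bilinear.bounded_linear_left[OF bounded_bilinear_ap])

lemma flow_apply_deriv:
  "((\<lambda>t. ap (flow A t) x) has_vector_derivative A *v ap (flow A t) x) (at t within T)"
proof -
  have "((\<lambda>t. ap (flow A t) x) has_vector_derivative ap (mofm A * flow A t) x) (at t within T)"
    by (rule bounded_linear.has_vector_derivative[OF bl_ap_left flow_deriv_left])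
  then show ?thesis by simp
qed

lemma skew_inner: "skew A \<Longrightarrow> y \<bullet> (A *v y) = 0"
proof -
  assume "skew A"
  then have t: "transpose A = - A" unfolding skew_def .
  have "y \<bullet> (A *v y) = (y v* A) \<bullet> y" by (simp add: dot_lmul_matrix)
  also have "y v* A = transpose A *v y" by simp
  also have "\<dots> = - (A *v y)" by (simp add: t vec_eq_iff matrix_vector_mult_def sum_negf)
  finally have "y \<bullet> (A *v y) = - ((A *v y) \<bullet> y)" by simp
  then show ?thesis by (simp add: inner_commute)
qed

lemma skew_inner2: "skew A \<Longrightarrow> y \<bullet> (A *v z) = - ((A *v y) \<bullet> z)"
proof -
  assume s: "skew A"
  have "(y + z) \<bullet> (A *v (y + z)) = 0" by (rule skew_inner[OF s])
  then show ?thesis using skew_inner[OF s, of y] skew_inner[OF s, of z]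
    by (simp add: matrix_vector_right_distrib inner_add_left inner_add_right inner_commute)
qed

lemma flow_norm:
  assumes "skew A"
  shows "norm (ap (flow A t) x) = norm x"
proof -
  define f where "f t = (ap (flow A t) x) \<bullet> (ap (flow A t) x)" for t
  have "DERIV f s :> 0" for s
  proof -
    have "(f has_vector_derivative
        (ap (flow A s) x) \<bullet> (A *v ap (flow A s) x) + (A *v ap (flow A s) x) \<bullet> (ap (flow A s) x)) (at s)"
      unfolding f_def
      by (rule bounded_bilinear.has_vector_derivative[OF bounded_bilinear_inner flow_apply_deriv flow_apply_deriv])
    then show ?thesis
      using skew_inner[OF assms, of "ap (flow A s) x"]
      by (simp add: inner_commute has_real_derivative_iff_has_vector_derivative)
  qed
  then have "f t = f 0" by (intro DERIV_isconst_all allI)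
  then have "norm (ap (flow A t) x) ^ 2 = norm x ^ 2"
    unfolding f_def by (simp add: power2_norm_eq_inner)
  then show ?thesis by (simp add: power2_eq_iff_nonneg)
qed

lemma flow_inner:
  assumes "skew A"
  shows "(ap (flow A t) x) \<bullet> (ap (flow A t) y) = x \<bullet> y"
proof -
  have "norm (ap (flow A t) (x + y))^2 = norm (x + y)^2" by (simp only: flow_norm[OF assms])
  then have "norm (ap (flow A t) x + ap (flow A t) y)^2 = norm (x + y)^2" by simp
  moreover have "norm (ap (flow A t) x)^2 = norm x^2" "norm (ap (flow A t) y)^2 = norm y^2"
    by (simp_all add: flow_norm[OF assms])
  ultimately show ?thesis
    by (simp add: power2_norm_eq_inner inner_add_left inner_add_right inner_commute)
qed

lemma norm_flow_le: "skew A \<Longrightarrow> norm (flow A t) \<le> 1"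
  by (rule norm_mat_bound) (simp_all add: flow_norm)

lemma flow_close:
  assumes "skew A" "skew B" "0 \<le> T"
  shows "norm (flow A T - flow B T) \<le> T * norm (mofm A - mofm B)"
proof -
  define G where "G s = flow B (-s) * flow A s" for s
  define G' where "G' s = flow B (-s) * (mofm A - mofm B) * flow A s" for s
  have d: "(G has_vector_derivative G' s) (at s within {0..T})" for s
  proof -
    have dB: "((\<lambda>s. flow B (-s)) has_vector_derivative - (flow B (-s) * mofm B)) (at s within {0..T})"
      using vector_diff_chain_within[OF has_vector_derivative_minus[OF has_vector_derivative_id] flow_deriv_right[of B "-s" "uminus ` {0..T}"]]
      by (simp add: o_def)
    have "(G has_vector_derivative flow B (-s) * (flow A s * mofm A) + (- (flow B (-s) * mofm B)) * flow A s) (at s within {0..T})"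
      unfolding G_def by (rule has_vector_derivative_mult[OF dB flow_deriv_right])
    moreover have "flow B (-s) * (flow A s * mofm A) + (- (flow B (-s) * mofm B)) * flow A s = G' s"
      unfolding G'_def by (simp add: algebra_simps flow_mofm_commute mult.assoc)
    ultimately show ?thesis by simp
  qed
  have "(G' has_integral (G T - G 0)) {0..T}"
    by (rule fundamental_theorem_of_calculus[OF assms(3)]) (use d in auto)
  moreover have "norm (G' s) \<le> norm (mofm A - mofm B)" for s
  proof -
    have "norm (G' s) \<le> norm (flow B (-s) * (mofm A - mofm B)) * norm (flow A s)"
      unfolding G'_def by (rule norm_mult_ineq)
    also have "\<dots> \<le> norm (flow B (-s)) * norm (mofm A - mofm B) * norm (flow A s)"
      by (simp add: mult_right_mono norm_mult_ineq)
    also have "\<dots> \<le> 1 * norm (mofm A - mofm B) * 1"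
      by (intro mult_mono norm_flow_le assms) auto
    finally show ?thesis by simp
  qed
  ultimately have "norm (G T - G 0) \<le> norm (mofm A - mofm B) * T"
    using has_integral_bound[of "norm (mofm A - mofm B)" G' "G T - G 0" 0 T] assms(3)
    by (simp add: cbox_interval)
  then have g: "norm (G T - 1) \<le> T * norm (mofm A - mofm B)"
    using assms(3) by (simp add: G_def mult.commute)
  have "flow A T - flow B T = flow B T * (G T - 1)"
    unfolding G_def by (simp add: algebra_simps flow_inv mult.assoc[symmetric])
  then have "norm (flow A T - flow B T) \<le> norm (flow B T) * norm (G T - 1)"
    by (simp add: norm_mult_ineq)
  also have "\<dots> \<le> 1 * (T * norm (mofm A - mofm B))"
    by (intro mult_mono norm_flow_le assms g) auto
  finally show ?thesis by simp
qed

lemma chop: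
  fixes \<Phi> :: "real \<Rightarrow> 'a::real_normed_vector" and \<mu> :: "real \<Rightarrow> real"
  assumes ab: "a \<le> b" and d: "d > 0"
    and st: "\<And>s t. a \<le> s \<Longrightarrow> s \<le> t \<Longrightarrow> t \<le> b \<Longrightarrow> t - s < d \<Longrightarrow> norm (\<Phi> t - \<Phi> s) \<le> \<mu> t - \<mu> s"
  shows "norm (\<Phi> b - \<Phi> a) \<le> \<mu> b - \<mu> a"
proof -
  obtain n :: nat where n: "(b - a) / d < n" using reals_Archimedean2 by blast
  have "0 \<le> (b - a) / d" using ab d by simp
  then have npos: "real n > 0" using n by linarith
  define p where "p i = a + real i * (b - a) / real n" for i
  have p0: "p 0 = a" and pn: "p n = b" using npos by (auto simp: p_def)
  have bd: "b - a < real n * d" using n d by (simp add: field_simps)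
  have step: "norm (\<Phi> (p (Suc i)) - \<Phi> (p i)) \<le> \<mu> (p (Suc i)) - \<mu> (p i)" if "i < n" for i
  proof (rule st)
    show "a \<le> p i" using ab npos by (simp add: p_def)
    show "p i \<le> p (Suc i)" using ab npos by (simp add: p_def field_simps)
    have "real (Suc i) * (b - a) \<le> real n * (b - a)"
      using that ab by (intro mult_right_mono) auto
    then show "p (Suc i) \<le> b" using npos by (simp add: p_def field_simps)
    have "p (Suc i) - p i = (b - a) / real n" using npos by (simp add: p_def field_simps)
    also have "\<dots> < d" using bd npos by (simp add: field_simps)
    finally show "p (Suc i) - p i < d" .
  qed
  have "\<Phi> b - \<Phi> a = (\<Sum>i<n. \<Phi> (p (Suc i)) - \<Phi> (p i))"
    by (subst sum_lessThan_telescope) (simp add: p0 pn)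
  then have "norm (\<Phi> b - \<Phi> a) \<le> (\<Sum>i<n. norm (\<Phi> (p (Suc i)) - \<Phi> (p i)))"
    by (simp add: norm_sum)
  also have "\<dots> \<le> (\<Sum>i<n. \<mu> (p (Suc i)) - \<mu> (p i))"
    by (rule sum_mono) (simp add: step)
  also have "\<dots> = \<mu> b - \<mu> a"
    by (subst sum_lessThan_telescope) (simp add: p0 pn)
  finally show ?thesis .
qed

lemma bilinear_mvm: "bilinear (\<lambda>(A::real^'n^'m) x. A *v x)"
  unfolding bilinear_def
  by (auto intro!: linearI simp: matrix_vector_mult_add_rdistrib scaleR_matrix_vector_assoc
      matrix_vector_right_distrib matrix_vector_mult_scaleR)

lemma cont_ap_left:
  "continuous_on S R \<Longrightarrow> continuous_on S (\<lambda>s. ap (R s) y)"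
  by (rule bounded_linear.continuous_on[OF bl_ap_left])

lemma ap_prod_abs_int:
  fixes R :: "real \<Rightarrow> 'k::finite mat" and g :: "real \<Rightarrow> real^'k"
  assumes cR: "continuous_on {a..b} R" and g: "g absolutely_integrable_on {a..b}"
  shows "(\<lambda>s. ap (R s) (g s)) absolutely_integrable_on {a..b}"
proof -
  define M where "M s = (\<chi> i j. ap (R s) (axis j 1) $ i)" for s
  have eq: "ap (R s) x = M s *v x" for s x
  proof -
    have "M s = matrix (ap (R s))" by (simp add: M_def matrix_def)
    then show ?thesis using matrix_vector_mul(3)[OF bounded_linear_ap, of "R s"]
      by (metis)
  qed
  have contM: "continuous_on {a..b} M"
    unfolding M_def
    by (intro continuous_on_vec_lambda bounded_linear.continuous_on[OF bounded_linear_vec_nth] cont_ap_left cR)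
  have "(\<lambda>x. M x *v g x) absolutely_integrable_on {a..b}"
  proof (rule absolutely_integrable_bounded_measurable_product[where h="\<lambda>A x. A *v x", OF bilinear_mvm])
    show "M \<in> borel_measurable (lebesgue_on {a..b})"
      by (rule continuous_imp_measurable_on_sets_lebesgue[OF contM]) simp
    show "{a..b} \<in> sets lebesgue" by simp
    show "bounded (M ` {a..b})"
      by (rule compact_imp_bounded[OF compact_continuous_image[OF contM compact_Icc]])
    show "g absolutely_integrable_on {a..b}" by (rule g)
  qed
  then show ?thesis by (simp add: eq)
qed

lemma real_aux: "(N::real) > 0 \<Longrightarrow> C \<ge> 0 \<Longrightarrow> N / (2 * (C + 1)) * C < N"
proof -
  assume N: "N > 0" and C: "C \<ge> 0"
  have "N * C < N * (2 * (C + 1))" using N C by simp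
  then show ?thesis using C by (simp add: field_simps)
qed

lemma ibp:
  fixes R R' :: "real \<Rightarrow> 'k::finite mat" and v g :: "real \<Rightarrow> real^'k"
  assumes ab: "a \<le> b"
    and dR: "\<And>s. (R has_vector_derivative R' s) (at s)"
    and cR': "continuous_on {a..b} R'"
    and g: "g absolutely_integrable_on {a..b}"
    and v: "\<And>s. s \<in> {a..b} \<Longrightarrow> v s - v a = integral {a..s} g"
  shows "((\<lambda>s. ap (R s) (g s) + ap (R' s) (v s)) has_integral (ap (R b) (v b) - ap (R a) (v a))) {a..b}"
proof -
  have cR: "continuous_on {a..b} R"
    by (rule continuous_on_vector_derivative) (use dR has_vector_derivative_at_within in blast)
  have gi: "g integrable_on {a..b}" and ngi: "(\<lambda>r. norm (g r)) integrable_on {a..b}"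
    using g by (auto simp: absolutely_integrable_on_def)
  have vI: "v t - v s = integral {s..t} g" if "a \<le> s" "s \<le> t" "t \<le> b" for s t
  proof -
    have "integral {a..s} g + integral {s..t} g = integral {a..t} g"
      by (rule Henstock_Kurzweil_Integration.integral_combine) (use that integrable_subinterval_real[OF gi] in auto)
    moreover have "v t - v a = integral {a..t} g" "v s - v a = integral {a..s} g"
      using that v by auto
    ultimately show ?thesis by (simp add: algebra_simps)
  qed
  have cv: "continuous_on {a..b} v"
  proof -
    have "continuous_on {a..b} (\<lambda>s. v a + integral {a..s} g)"
      by (rule continuous_on_add[OF continuous_on_const indefinite_integral_continuous_1[OF gi]])
    then show ?thesis
    proof (rule continuous_on_eq)
      fix x assume "x \<in> {a..b}"
      then show "v a + integral {a..x} g = v x" using v[of x] by (simp add: algebra_simps)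
    qed
  qed
  define f where "f s = ap (R s) (g s) + ap (R' s) (v s)" for s
  have c2: "continuous_on {a..b} (\<lambda>s. ap (R' s) (v s))"
    by (rule bounded_bilinear.continuous_on[OF bounded_bilinear_ap cR' cv])
  have fi: "f integrable_on {a..b}"
  proof -
    have "(\<lambda>s. ap (R s) (g s)) integrable_on {a..b}"
      using ap_prod_abs_int[OF cR g] by (simp add: absolutely_integrable_on_def)
    then show ?thesis unfolding f_def
      by (rule integrable_add[OF _ integrable_continuous_interval[OF c2]])
  qed
  define H where "H s = ap (R s) (v s)" for s
  define \<Phi> where "\<Phi> t = integral {a..t} f - (H t - H a)" for t
  obtain K where K: "\<And>s. s \<in> {a..b} \<Longrightarrow> norm (R' s) \<le> K" and K0: "K > 0"
    using compact_imp_bounded[OF compact_continuous_image[OF cR' compact_Icc]]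
    unfolding bounded_pos by (meson image_eqI)
  define C where "C = integral {a..b} (\<lambda>r. norm (g r)) + K * b - (integral {a..a} (\<lambda>r. norm (g r)) + K * a)"
  have key: "norm (\<Phi> b - \<Phi> a) \<le> e * C" if e: "e > 0" for e
  proof -
    obtain d1 where d1: "d1 > 0" "\<And>x x'. x \<in> {a..b} \<Longrightarrow> x' \<in> {a..b} \<Longrightarrow> dist x' x < d1 \<Longrightarrow> dist (R x') (R x) < e"
      using compact_uniformly_continuous[OF cR compact_Icc] e unfolding uniformly_continuous_on_def by metis
    obtain d2 where d2: "d2 > 0" "\<And>x x'. x \<in> {a..b} \<Longrightarrow> x' \<in> {a..b} \<Longrightarrow> dist x' x < d2 \<Longrightarrow> dist (v x') (v x) < e"
      using compact_uniformly_continuous[OF cv compact_Icc] e unfolding uniformly_continuous_on_def by metis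
    define \<mu> where "\<mu> t = e * (integral {a..t} (\<lambda>r. norm (g r)) + K * t)" for t
    have "norm (\<Phi> b - \<Phi> a) \<le> \<mu> b - \<mu> a"
    proof (rule chop[OF ab, of "min d1 d2"])
      show "min d1 d2 > 0" using d1 d2 by simp
      fix s t assume st: "a \<le> s" "s \<le> t" "t \<le> b" "t - s < min d1 d2"
      have sub: "{s..t} \<subseteq> {a..b}" using st by auto
      have fst: "f integrable_on {s..t}" by (rule integrable_subinterval_real[OF fi sub])
      have gst: "g integrable_on {s..t}" by (rule integrable_subinterval_real[OF gi sub])
      have ngst: "(\<lambda>r. norm (g r)) integrable_on {s..t}" by (rule integrable_subinterval_real[OF ngi sub])
      have i1: "integral {a..s} f + integral {s..t} f = integral {a..t} f"
        by (rule Henstock_Kurzweil_Integration.integral_combine) (use st integrable_subinterval_real[OF fi] in auto)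
      have i2: "integral {a..s} (\<lambda>r. norm (g r)) + integral {s..t} (\<lambda>r. norm (g r)) = integral {a..t} (\<lambda>r. norm (g r))"
        by (rule Henstock_Kurzweil_Integration.integral_combine) (use st integrable_subinterval_real[OF ngi] in auto)
      have Rint: "(R' has_integral (R t - R s)) {s..t}"
        by (rule fundamental_theorem_of_calculus) (use st has_vector_derivative_at_within[OF dR] in auto)
      have h1: "integral {s..t} (\<lambda>r. ap (R s) (g r)) = ap (R s) (v t - v s)"
        using integral_linear[OF gst bounded_linear_ap[of "R s"]] vI[OF st(1-3)] by (simp add: o_def)
      have h2i: "(\<lambda>r. ap (R' r) (v t)) integrable_on {s..t}"
        and h2: "integral {s..t} (\<lambda>r. ap (R' r) (v t)) = ap (R t - R s) (v t)"
      proof -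
        have "((\<lambda>r. ap (R' r) (v t)) has_integral ap (R t - R s) (v t)) {s..t}"
          using has_integral_linear[OF Rint bl_ap_left[of "v t"]] by (simp add: o_def)
        then show "(\<lambda>r. ap (R' r) (v t)) integrable_on {s..t}"
             "integral {s..t} (\<lambda>r. ap (R' r) (v t)) = ap (R t - R s) (v t)"
          by (auto simp: has_integral_iff)
      qed
      have h1i: "(\<lambda>r. ap (R s) (g r)) integrable_on {s..t}"
        using integrable_linear[OF gst bounded_linear_ap[of "R s"]] by (simp add: o_def)
      define q where "q r = f r - ap (R s) (g r) - ap (R' r) (v t)" for r
      have qi: "q integrable_on {s..t}"
        unfolding q_def by (intro integrable_diff fst h1i h2i)
      have qint: "integral {s..t} q = integral {s..t} f - ap (R s) (v t - v s) - ap (R t - R s) (v t)"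
        unfolding q_def using fst h1i h2i h1 h2 by (simp add: integral_diff integrable_diff)
      have "\<Phi> t - \<Phi> s = integral {s..t} f - (H t - H s)"
        unfolding \<Phi>_def using i1 by (simp add: algebra_simps)
      also have "\<dots> = integral {s..t} q"
        unfolding qint H_def by (simp add: algebra_simps)
      finally have eqq: "\<Phi> t - \<Phi> s = integral {s..t} q" .
      have qb: "norm (q r) \<le> e * norm (g r) + K * e" if r: "r \<in> {s..t}" for r
      proof -
        have ra: "r \<in> {a..b}" using r sub by auto
        have sa: "s \<in> {a..b}" "t \<in> {a..b}" using st by auto
        have "q r = ap (R r - R s) (g r) + ap (R' r) (v r - v t)"
          unfolding q_def f_def by (simp add: algebra_simps)
        then have "norm (q r) \<le> norm (ap (R r - R s) (g r)) + norm (ap (R' r) (v r - v t))"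
          by (simp add: norm_triangle_ineq)
        also have "norm (ap (R r - R s) (g r)) \<le> norm (R r - R s) * norm (g r)" by (rule ap_norm)
        also have "norm (R r - R s) \<le> e"
          using d1(2)[OF sa(1) ra] r st by (auto simp: dist_norm)
        also have "norm (ap (R' r) (v r - v t)) \<le> norm (R' r) * norm (v r - v t)" by (rule ap_norm)
        also have "norm (R' r) * norm (v r - v t) \<le> K * e"
        proof (rule mult_mono)
          show "norm (R' r) \<le> K" using K ra by auto
          show "norm (v r - v t) \<le> e"
            using d2(2)[OF sa(2) ra] r st by (auto simp: dist_norm)
        qed (use K0 in auto)
        finally show ?thesis by (simp add: mult_right_mono)
      qed
      have "norm (\<Phi> t - \<Phi> s) \<le> integral {s..t} (\<lambda>r. e * norm (g r) + K * e)"
        unfolding eqq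
        by (rule integral_norm_bound_integral[OF qi _ qb])
          (intro integrable_add integrable_const_ivl, use integrable_cmul[OF ngst, of e] in simp)
      also have "\<dots> = e * integral {s..t} (\<lambda>r. norm (g r)) + K * e * (t - s)"
      proof -
        have "integral {s..t} (\<lambda>r. e * norm (g r) + K * e)
            = integral {s..t} (\<lambda>r. e * norm (g r)) + integral {s..t} (\<lambda>r. K * e)"
          by (rule integral_add) (use integrable_cmul[OF ngst, of e] in \<open>simp_all add: integrable_const_ivl\<close>)
        moreover have "integral {s..t} (\<lambda>r. e * norm (g r)) = e * integral {s..t} (\<lambda>r. norm (g r))"
          by (rule integral_mult_right)
        moreover have "integral {s..t} (\<lambda>r. K * e) = K * e * (t - s)"
          using st by simp
        ultimately show ?thesis by simp
      qed
      also have "\<dots> = \<mu> t - \<mu> s"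
        unfolding \<mu>_def using i2[symmetric] by (simp add: algebra_simps)
      finally show "norm (\<Phi> t - \<Phi> s) \<le> \<mu> t - \<mu> s" .
    qed
    also have "\<mu> b - \<mu> a = e * C" unfolding \<mu>_def C_def by (simp add: algebra_simps)
    finally show ?thesis .
  qed
  have "norm (\<Phi> b - \<Phi> a) = 0"
  proof (rule ccontr)
    assume nz: "norm (\<Phi> b - \<Phi> a) \<noteq> 0"
    then have pos: "norm (\<Phi> b - \<Phi> a) > 0" by simp
    have C0: "C \<ge> 0" using key[of 1] norm_ge_zero[of "\<Phi> b - \<Phi> a"] by linarith
    define e where "e = norm (\<Phi> b - \<Phi> a) / (2 * (C + 1))"
    have e0: "e > 0" unfolding e_def using pos C0 by simp
    have "norm (\<Phi> b - \<Phi> a) \<le> e * C" by (rule key[OF e0])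
    also have "\<dots> < norm (\<Phi> b - \<Phi> a)"
      unfolding e_def by (rule real_aux[OF pos C0])
    finally show False by simp
  qed
  then have "\<Phi> b = \<Phi> a" by simp
  then have "integral {a..b} f = H b - H a" by (simp add: \<Phi>_def)
  then show ?thesis using fi unfolding f_def H_def by (simp add: has_integral_iff)
qed

lemma proj_exists:
  fixes F :: "(real^'k::finite) set"
  assumes "subspace F"
  obtains P where "bounded_linear P" "\<And>x. P x \<in> F"
    "\<And>x z. z \<in> F \<Longrightarrow> (x - P x) \<bullet> z = 0"
    "\<And>z. (\<And>x. x \<in> F \<Longrightarrow> z \<bullet> x = 0) \<Longrightarrow> P z = 0"
    "\<And>x. norm (P x) \<le> norm x"
proof -
  obtain B where B: "B \<subseteq> F" "pairwise orthogonal B" "\<And>x. x \<in> B \<Longrightarrow> norm x = 1"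
    "span B = F"
    using orthonormal_basis_subspace[OF assms] by metis
  have fin: "finite B" by (rule pairwise_orthogonal_imp_finite[OF B(2)])
  define P where "P x = (\<Sum>b\<in>B. (x \<bullet> b) *\<^sub>R b)" for x
  have lin: "linear P"
    unfolding P_def
    by (rule linearI) (simp_all add: inner_add_left scaleR_add_left sum.distrib scaleR_sum_right)
  have inF: "P x \<in> F" for x
  proof -
    have "P x \<in> span B" unfolding P_def
      by (intro span_sum span_scale span_base) auto
    then show ?thesis using B(4) by simp
  qed
  have orthB: "(x - P x) \<bullet> b' = 0" if b': "b' \<in> B" for x b'
  proof -
    have "P x \<bullet> b' = (\<Sum>b\<in>B. (x \<bullet> b) * (b \<bullet> b'))"
      unfolding P_def by (simp add: inner_sum_left)
    also have "\<dots> = (x \<bullet> b') * (b' \<bullet> b') + (\<Sum>b\<in>B - {b'}. (x \<bullet> b) * (b \<bullet> b'))"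
      by (rule sum.remove[OF fin b'])
    also have "(\<Sum>b\<in>B - {b'}. (x \<bullet> b) * (b \<bullet> b')) = 0"
      by (rule sum.neutral) (use B(2) b' in \<open>auto simp: pairwise_def orthogonal_def\<close>)
    also have "b' \<bullet> b' = 1" using B(3)[OF b'] by (simp add: norm_eq_1)
    finally show ?thesis by (simp add: inner_diff_left)
  qed
  have orthF: "(x - P x) \<bullet> z = 0" if "z \<in> F" for x z
  proof -
    have "orthogonal (x - P x) z"
      by (rule orthogonal_to_span[of z B]) (use that B(4) orthB in \<open>auto simp: orthogonal_def\<close>)
    then show ?thesis by (simp add: orthogonal_def)
  qed
  have zero: "P z = 0" if "\<And>x. x \<in> F \<Longrightarrow> z \<bullet> x = 0" for z
    unfolding P_def by (rule sum.neutral) (use that B(1) in auto)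
  have nrm: "norm (P x) \<le> norm x" for x
  proof -
    have "orthogonal (P x) (x - P x)"
      using orthF[OF inF[of x], of x] by (simp add: orthogonal_def inner_commute)
    then have "(norm (P x + (x - P x)))\<^sup>2 = (norm (P x))\<^sup>2 + (norm (x - P x))\<^sup>2"
      by (rule norm_add_Pythagorean)
    then have "(norm (P x))\<^sup>2 \<le> (norm x)\<^sup>2" by simp
    then show ?thesis by (rule power2_le_imp_le) simp
  qed
  show ?thesis
    by (rule that[of P]) (use lin linear_conv_bounded_linear inF orthF zero nrm in auto)
qed

lemma W22D:
  assumes "W22 u u1 u2"
  shows "\<And>t. u (t + 2*pi) = u t" "\<And>t. (u has_vector_derivative u1 t) (at t)"
    "\<And>a b. a \<le> b \<Longrightarrow> u2 absolutely_integrable_on {a..b}"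
    "\<And>a b. a \<le> b \<Longrightarrow> u1 b - u1 a = integral {a..b} u2"
    "(\<lambda>t. (norm (u2 t))\<^sup>2) integrable_on {0..2*pi}"
  using assms unfolding W22_def by auto

lemma W22_u1_cont:
  assumes "W22 u u1 u2"
  shows "continuous_on {a..b} u1"
proof (cases "a \<le> b")
  case True
  have gi: "u2 integrable_on {a..b}"
    using W22D(3)[OF assms True] by (simp add: absolutely_integrable_on_def)
  have "continuous_on {a..b} (\<lambda>s. u1 a + integral {a..s} u2)"
    by (rule continuous_on_add[OF continuous_on_const indefinite_integral_continuous_1[OF gi]])
  then show ?thesis
  proof (rule continuous_on_eq)
    fix x assume "x \<in> {a..b}"
    then show "u1 a + integral {a..x} u2 = u1 x" using W22D(4)[OF assms, of a x] by (simp add: algebra_simps)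
  qed
next
  case False
  then show ?thesis by simp
qed

lemma W22_u1_per:
  assumes "W22 u u1 u2"
  shows "u1 (t + 2*pi) = u1 t"
proof -
  have "((\<lambda>s. u (s + 2*pi)) has_vector_derivative u1 (t + 2*pi)) (at t)"
    using vector_diff_chain_at[OF has_vector_derivative_add_const[THEN iffD2, OF has_vector_derivative_id, of "2*pi" "at t"] W22D(2)[OF assms, of "t + 2*pi"]]
    by (simp add: o_def)
  moreover have "(\<lambda>s. u (s + 2*pi)) = u" using W22D(1)[OF assms] by auto
  ultimately show ?thesis using vector_derivative_unique_at W22D(2)[OF assms, of t] by metis
qed

lemma cs_aux:
  fixes V X p :: real
  assumes p: "p > 0" and V0: "V \<ge> 0" and le: "\<And>l. l > 0 \<Longrightarrow> V \<le> p * l + X / (2 * l)"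
  shows "V^2 \<le> 2 * p * X"
proof (cases "V = 0")
  case True
  have "0 \<le> X" 
  proof -
    have "V \<le> p * 1 + X / 2" using le[of 1] by simp
    have "\<And>l. l > 0 \<Longrightarrow> 0 \<le> p * l * (2 * l) + X"
    proof -
      fix l :: real assume l: "l > 0"
      have "0 \<le> p * l + X / (2 * l)" using le[OF l] True by simp
      then have "0 \<le> (p * l + X / (2 * l)) * (2 * l)" using l by simp
      moreover have "(p * l + X / (2 * l)) * (2 * l) = p * l * (2 * l) + X"
        using l by (simp add: field_simps)
      ultimately show "0 \<le> p * l * (2 * l) + X" by simp
    qed
    show ?thesis
    proof (rule ccontr)
      assume "\<not> 0 \<le> X"
      then have X: "X < 0" by simp
      define l where "l = sqrt (- X / (4 * p))"
      have "X / (4 * p) < 0" by (rule divide_neg_pos) (use X p in auto)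
      then have l0: "l > 0" unfolding l_def by simp
      have "l * l = - X / (4 * p)" unfolding l_def using X p by simp
      then have "p * l * (2 * l) + X = X / 2" using p by (simp add: field_simps)
      with \<open>\<And>l. l > 0 \<Longrightarrow> 0 \<le> p * l * (2 * l) + X\<close>[OF l0] X show False by simp
    qed
  qed
  then show ?thesis using True p by simp
next
  case False
  then have V: "V > 0" using V0 by simp
  define l where "l = V / (2 * p)"
  have l0: "l > 0" unfolding l_def using V p by simp
  have "V \<le> p * l + X / (2 * l)" by (rule le[OF l0])
  then have "V * (2 * l) \<le> (p * l + X / (2 * l)) * (2 * l)" using l0 by simp
  moreover have "(p * l + X / (2 * l)) * (2 * l) = 2 * p * l * l + X" using l0 by (simp add: field_simps)
  ultimately have "V * (2 * l) \<le> 2 * p * l * l + X" by simp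
  then have "V * V / p \<le> V * V / (2 * p) + X" unfolding l_def using p by (simp add: field_simps power2_eq_square)
  then have "V * V / (2 * p) \<le> X" by (simp add: field_simps)
  then show ?thesis using p by (simp add: field_simps power2_eq_square)
qed

lemma abs_int_add:
  "f absolutely_integrable_on S \<Longrightarrow> g absolutely_integrable_on S \<Longrightarrow> (\<lambda>x. f x + g x) absolutely_integrable_on S"
  by (rule set_integral_add(1))

lemma pc_bound:
  fixes A :: "real^'k::finite^'k" and F :: "(real^'k) set" and P :: "real^'k \<Rightarrow> real^'k"
  assumes skA: "skew A" and dpos: "\<delta> > 0"
    and fixF: "\<And>x. x \<in> F \<Longrightarrow> ap (flow A (2*pi)) x = x"
    and gap: "\<And>z. (\<And>x. x \<in> F \<Longrightarrow> z \<bullet> x = 0) \<Longrightarrow> \<delta> * norm z \<le> norm (ap (flow A (2*pi)) z - z)"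
    and Pl: "bounded_linear P" and PF: "\<And>x. P x \<in> F"
    and Porth: "\<And>x z. z \<in> F \<Longrightarrow> (x - P x) \<bullet> z = 0"
    and Pz: "\<And>z. (\<And>x. x \<in> F \<Longrightarrow> z \<bullet> x = 0) \<Longrightarrow> P z = 0"
    and Pn: "\<And>x. norm (P x) \<le> norm x"
    and W: "W22 u u1 u2"
  shows "integral {0..2*pi} (\<lambda>t. (norm (cov_d1 A u u1 t))\<^sup>2)
      \<le> ((2*pi) * (1 + 1/\<delta>))\<^sup>2 * integral {0..2*pi} (\<lambda>t. (norm (cov_d2 A u u1 u2 t))\<^sup>2)"
proof -
  define T where "T = 2 * pi"
  have T0: "T > 0" unfolding T_def by simp
  define M where "M = flow A T"
  define v where "v t = cov_d1 A u u1 t" for t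
  define g where "g t = u2 t + A *v u1 t" for t
  define d where "d t = cov_d2 A u u1 u2 t" for t
  define y where "y t = ap (flow A t) (v t)" for t
  have v_def': "v t = u1 t + A *v u t" for t unfolding v_def cov_d1_def by simp
  have d_eq: "d t = g t + A *v v t" for t unfolding d_def cov_d2_def g_def v_def' by simp
  have cu1: "continuous_on {a..b} u1" for a b by (rule W22_u1_cont[OF W])
  have cu: "continuous_on {a..b} u" for a b
    by (rule continuous_on_vector_derivative) (use W22D(2)[OF W] has_vector_derivative_at_within in blast)
  have cv: "continuous_on {a..b} v" for a b
    unfolding v_def'[abs_def]
    by (intro continuous_on_add cu1 bounded_linear.continuous_on[OF matrix_vector_mul_bounded_linear] cu)
  have gabs: "g absolutely_integrable_on {a..b}" if "a \<le> b" for a b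
    unfolding g_def
    by (intro abs_int_add W22D(3)[OF W that] absolutely_integrable_continuous_real
        bounded_linear.continuous_on[OF matrix_vector_mul_bounded_linear] cu1)
  have dabs: "d absolutely_integrable_on {a..b}" if "a \<le> b" for a b
    unfolding d_eq[abs_def]
    by (intro abs_int_add gabs[OF that] absolutely_integrable_continuous_real
        bounded_linear.continuous_on[OF matrix_vector_mul_bounded_linear] cv)
  have vint: "v s - v a = integral {a..s} g" if "a \<le> s" for a s
  proof -
    have u2i: "u2 integrable_on {a..s}"
      using W22D(3)[OF W that] by (simp add: absolutely_integrable_on_def)
    have hA: "((\<lambda>t. A *v u1 t) has_integral (A *v u s - A *v u a)) {a..s}"
    proof (rule fundamental_theorem_of_calculus[OF that])
      fix x assume "x \<in> {a..s}"
      show "((\<lambda>t. A *v u t) has_vector_derivative A *v u1 x) (at x within {a..s})"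
        by (rule bounded_linear.has_vector_derivative[OF matrix_vector_mul_bounded_linear])
          (use W22D(2)[OF W] has_vector_derivative_at_within in blast)
    qed
    have "integral {a..s} g = integral {a..s} u2 + integral {a..s} (\<lambda>t. A *v u1 t)"
      unfolding g_def by (rule integral_add[OF u2i]) (use hA in blast)
    also have "\<dots> = (u1 s - u1 a) + (A *v u s - A *v u a)"
      using W22D(4)[OF W that] hA by (simp add: integral_unique)
    finally show ?thesis unfolding v_def' by (simp add: algebra_simps)
  qed
  have cflow: "continuous_on S (flow A)" for S
    by (rule continuous_on_vector_derivative) (rule flow_deriv_right)
  have ydiff: "((\<lambda>s. ap (flow A s) (d s)) has_integral (y b - y a)) {a..b}" if "a \<le> b" for a b
  proof -
    have "((\<lambda>s. ap (flow A s) (g s) + ap (flow A s * mofm A) (v s)) has_integral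
        (ap (flow A b) (v b) - ap (flow A a) (v a))) {a..b}"
    proof (rule ibp[OF that])
      show "(flow A has_vector_derivative flow A s * mofm A) (at s)" for s by (rule flow_deriv_right)
      show "continuous_on {a..b} (\<lambda>s. flow A s * mofm A)"
        by (intro continuous_on_mult_right cflow)
      show "g absolutely_integrable_on {a..b}" by (rule gabs[OF that])
      show "v s - v a = integral {a..s} g" if "s \<in> {a..b}" for s using vint that by auto
    qed
    moreover have "ap (flow A s) (g s) + ap (flow A s * mofm A) (v s) = ap (flow A s) (d s)" for s
      by (simp add: d_eq)
    ultimately show ?thesis by (simp add: y_def)
  qed
  have dn: "(\<lambda>s. norm (d s)) integrable_on {a..b}" if "a \<le> b" for a b
    using dabs[OF that] by (simp add: absolutely_integrable_on_def)
  have ybound: "norm (y b - y a) \<le> integral {a..b} (\<lambda>s. norm (d s))" if "a \<le> b" for a b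
  proof -
    have "y b - y a = integral {a..b} (\<lambda>s. ap (flow A s) (d s))"
      using ydiff[OF that] by (simp add: integral_unique)
    also have "norm \<dots> \<le> integral {a..b} (\<lambda>s. norm (d s))"
      by (rule integral_norm_bound_integral)
        (use ydiff[OF that] dn[OF that] flow_norm[OF skA] in auto)
    finally show ?thesis .
  qed
  define V where "V = integral {0..T} (\<lambda>s. norm (d s))"
  have V0: "V \<ge> 0" unfolding V_def by (rule integral_nonneg) (use dn T0 in auto)
  have split: "integral {0..t} (\<lambda>s. norm (d s)) + integral {t..T} (\<lambda>s. norm (d s)) = V"
    if "t \<in> {0..T}" for t
    unfolding V_def by (rule Henstock_Kurzweil_Integration.integral_combine) (use that dn T0 in auto)
  have sub_le: "integral {a..b} (\<lambda>s. norm (d s)) \<le> V" if "0 \<le> a" "a \<le> b" "b \<le> T" for a b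
    unfolding V_def
    by (rule integral_subset_le) (use that dn T0 in auto)
  have ydist: "norm (y t - y s) \<le> V" if "s \<in> {0..T}" "t \<in> {0..T}" for s t
  proof (cases "s \<le> t")
    case True
    then show ?thesis using ybound[OF True] sub_le[of s t] that by auto
  next
    case False
    then have "t \<le> s" by simp
    then show ?thesis using ybound[OF \<open>t \<le> s\<close>] sub_le[of t s] that by (auto simp: norm_minus_commute)
  qed
  have vT: "v T = v 0"
    unfolding v_def' T_def using W22D(1)[OF W, of 0] W22_u1_per[OF W, of 0] by simp
  have yT: "y T = ap M (y 0)"
    unfolding y_def M_def by (simp add: vT)
  have Mnorm: "norm (ap M x) = norm x" for x unfolding M_def by (rule flow_norm[OF skA])
  have fixF': "ap M x = x" if "x \<in> F" for x using fixF[OF that] unfolding M_def T_def .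
  have Qb: "\<delta> * norm (y t - P (y t)) \<le> V" if t: "t \<in> {0..T}" for t
  proof -
    have "ap M (y t) - y t = ap M (y t - y 0) + (y T - y t)" by (simp add: yT)
    then have "norm (ap M (y t) - y t) \<le> norm (y t - y 0) + norm (y T - y t)"
      using norm_triangle_ineq[of "ap M (y t - y 0)" "y T - y t"] Mnorm[of "y t - y 0"] by simp
    also have "\<dots> \<le> integral {0..t} (\<lambda>s. norm (d s)) + integral {t..T} (\<lambda>s. norm (d s))"
      using ybound[of 0 t] ybound[of t T] t by auto
    also have "\<dots> = V" by (rule split[OF t])
    finally have 1: "norm (ap M (y t) - y t) \<le> V" .
    have "\<delta> * norm (y t - P (y t)) \<le> norm (ap M (y t - P (y t)) - (y t - P (y t)))"
      unfolding M_def T_def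
      by (rule gap) (use Porth in \<open>simp add: inner_commute\<close>)
    also have "ap M (y t - P (y t)) - (y t - P (y t)) = ap M (y t) - y t"
      using fixF'[OF PF[of "y t"]] by simp
    finally show ?thesis using 1 by simp
  qed
  define w where "w t = ap (flow A t) (u t)" for t
  have wd: "(w has_vector_derivative y t) (at t within S)" for t S
  proof -
    have "(w has_vector_derivative ap (flow A t) (u1 t) + ap (flow A t * mofm A) (u t)) (at t within S)"
      unfolding w_def
      by (rule bounded_bilinear.has_vector_derivative[OF bounded_bilinear_ap flow_deriv_right])
        (use W22D(2)[OF W] has_vector_derivative_at_within in blast)
    moreover have "ap (flow A t) (u1 t) + ap (flow A t * mofm A) (u t) = y t"
      by (simp add: y_def v_def')
    ultimately show ?thesis by simp
  qed
  have yint: "(y has_integral (w T - w 0)) {0..T}"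
    by (rule fundamental_theorem_of_calculus) (use T0 wd in auto)
  have wT: "w T - w 0 = ap M (u 0) - u 0"
    unfolding w_def M_def T_def using W22D(1)[OF W, of 0] by simp
  have Pw: "P (w T - w 0) = 0"
  proof -
    define z0 where "z0 = u 0 - P (u 0)"
    have z0o: "z0 \<bullet> x = 0" if "x \<in> F" for x unfolding z0_def by (rule Porth[OF that])
    have "ap M (u 0) - u 0 = ap M z0 - z0"
      unfolding z0_def using fixF'[OF PF[of "u 0"]] by simp
    moreover have "(ap M z0 - z0) \<bullet> x = 0" if "x \<in> F" for x
    proof -
      have "ap M z0 \<bullet> x = ap M z0 \<bullet> ap M x" using fixF'[OF that] by simp
      also have "\<dots> = z0 \<bullet> x" unfolding M_def by (rule flow_inner[OF skA])
      finally show ?thesis using z0o[OF that] by (simp add: inner_diff_left)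
    qed
    ultimately show ?thesis using wT Pz by metis
  qed
  have cy: "continuous_on {0..T} y"
    unfolding y_def by (rule bounded_bilinear.continuous_on[OF bounded_bilinear_ap cflow cv])
  have cPy: "continuous_on {0..T} (\<lambda>s. P (y s))"
    by (rule bounded_linear.continuous_on[OF Pl cy])
  have intPy: "integral {0..T} (\<lambda>s. P (y s)) = 0"
  proof -
    have "((\<lambda>s. P (y s)) has_integral P (w T - w 0)) {0..T}"
      using has_integral_linear[OF yint Pl] by (simp add: o_def)
    then show ?thesis using Pw by (simp add: integral_unique)
  qed
  have Pb: "norm (P (y t)) \<le> V" if t: "t \<in> {0..T}" for t
  proof -
    have i1: "((\<lambda>s. P (y t)) has_integral T *\<^sub>R P (y t)) {0..T}"
      using has_integral_const_real[of "P (y t)" 0 T] T0 by simp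
    have i2: "((\<lambda>s. P (y s)) has_integral 0) {0..T}"
      using integrable_continuous_interval[OF cPy] intPy by (metis has_integral_integral)
    have i3: "((\<lambda>s. P (y t) - P (y s)) has_integral T *\<^sub>R P (y t)) {0..T}"
      using has_integral_diff[OF i1 i2] by simp
    have i3': "((\<lambda>s. P (y t) - P (y s)) has_integral T *\<^sub>R P (y t)) (cbox 0 T)"
      using i3 by (simp add: cbox_interval)
    have bnd: "norm (P (y t) - P (y s)) \<le> V" if s: "s \<in> cbox 0 T" for s
    proof -
      have "norm (P (y t) - P (y s)) = norm (P (y t - y s))"
        by (simp add: linear_diff bounded_linear.linear[OF Pl])
      also have "\<dots> \<le> norm (y t - y s)" by (rule Pn)
      also have "\<dots> \<le> V" by (rule ydist) (use s t in \<open>auto simp: cbox_interval\<close>)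
      finally show "norm (P (y t) - P (y s)) \<le> V" .
    qed
    have "norm (T *\<^sub>R P (y t)) \<le> V * T"
      using has_integral_bound[OF V0 i3' bnd] T0 by (simp add: cbox_interval)
    then have "T * norm (P (y t)) \<le> V * T" using T0 by simp
    then show ?thesis using T0 by (simp add: mult.commute)
  qed
  have yb: "norm (v t) \<le> (1 + 1/\<delta>) * V" if t: "t \<in> {0..T}" for t
  proof -
    have "norm (v t) = norm (y t)" unfolding y_def by (simp add: flow_norm[OF skA])
    also have "\<dots> \<le> norm (P (y t)) + norm (y t - P (y t))"
      using norm_triangle_ineq[of "P (y t)" "y t - P (y t)"] by simp
    also have "norm (y t - P (y t)) \<le> V / \<delta>"
      using Qb[OF t] dpos by (simp add: field_simps)
    also have "norm (P (y t)) \<le> V" by (rule Pb[OF t])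
    finally show ?thesis by (simp add: field_simps)
  qed
  have lhs: "integral {0..T} (\<lambda>t. (norm (v t))\<^sup>2) \<le> T * ((1 + 1/\<delta>) * V)\<^sup>2"
  proof -
    have "integral {0..T} (\<lambda>t. (norm (v t))\<^sup>2) \<le> integral {0..T} (\<lambda>t. ((1 + 1/\<delta>) * V)\<^sup>2)"
    proof (rule integral_le)
      show "(\<lambda>t. (norm (v t))\<^sup>2) integrable_on {0..T}"
        by (intro integrable_continuous_interval continuous_intros cv)
      show "(\<lambda>t. ((1 + 1/\<delta>) * V)\<^sup>2) integrable_on {0..T}" by (rule integrable_const_ivl)
      fix t assume "t \<in> {0..T}"
      then show "(norm (v t))\<^sup>2 \<le> ((1 + 1/\<delta>) * V)\<^sup>2"
        using yb by (intro power_mono) auto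
    qed
    also have "\<dots> = T * ((1 + 1/\<delta>) * V)\<^sup>2" using T0 by simp
    finally show ?thesis .
  qed
  define X where "X = integral {0..T} (\<lambda>t. (norm (d t))\<^sup>2)"
  have d2i: "(\<lambda>t. (norm (d t))\<^sup>2) integrable_on {0..T}"
  proof -
    define c where "c t = A *v u1 t + A *v v t" for t
    have cc: "continuous_on {0..T} c"
      unfolding c_def
      by (intro continuous_on_add bounded_linear.continuous_on[OF matrix_vector_mul_bounded_linear] cu1 cv)
    have dc: "d t = u2 t + c t" for t unfolding d_eq g_def c_def by (simp add: algebra_simps)
    have "(\<lambda>t. (norm (d t))\<^sup>2) absolutely_integrable_on {0..T}"
    proof (rule measurable_bounded_by_integrable_imp_absolutely_integrable)
      have "d \<in> borel_measurable (lebesgue_on {0..T})"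
        using dabs[of 0 T] T0 by (simp add: absolutely_integrable_measurable)
      then show "(\<lambda>t. (norm (d t))\<^sup>2) \<in> borel_measurable (lebesgue_on {0..T})"
        by measurable
      show "{0..T} \<in> sets lebesgue" by simp
      show "(\<lambda>t. 2 * (norm (u2 t))\<^sup>2 + 2 * (norm (c t))\<^sup>2) integrable_on {0..T}"
      proof (rule integrable_add)
        have "2 * pi = T" by (simp add: T_def)
        then show "(\<lambda>t. 2 * (norm (u2 t))\<^sup>2) integrable_on {0..T}"
          using integrable_cmul[OF W22D(5)[OF W], of 2] by simp
        show "(\<lambda>t. 2 * (norm (c t))\<^sup>2) integrable_on {0..T}"
          by (intro integrable_continuous_interval continuous_intros cc)
      qed
      fix t assume "t \<in> {0..T}"
      have "norm (d t) \<le> norm (u2 t) + norm (c t)" unfolding dc by (rule norm_triangle_ineq)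
      then have "(norm (d t))\<^sup>2 \<le> (norm (u2 t) + norm (c t))\<^sup>2" by (intro power_mono) auto
      also have "\<dots> \<le> 2 * (norm (u2 t))\<^sup>2 + 2 * (norm (c t))\<^sup>2"
      proof -
        have "0 \<le> (norm (u2 t) - norm (c t))\<^sup>2" by simp
        then show ?thesis by (simp add: power2_eq_square algebra_simps)
      qed
      finally show "norm ((norm (d t))\<^sup>2) \<le> 2 * (norm (u2 t))\<^sup>2 + 2 * (norm (c t))\<^sup>2" by simp
    qed
    then show ?thesis by (simp add: absolutely_integrable_on_def)
  qed
  have VX: "V\<^sup>2 \<le> T * X"
  proof -
    have "V\<^sup>2 \<le> 2 * (T/2) * X"
    proof (rule cs_aux)
      show "T/2 > 0" using T0 by simp
      show "V \<ge> 0" by (rule V0)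
      fix l :: real assume l: "l > 0"
      have "V \<le> integral {0..T} (\<lambda>t. l/2 + (norm (d t))\<^sup>2 / (2*l))"
        unfolding V_def
      proof (rule integral_le)
        show "(\<lambda>t. norm (d t)) integrable_on {0..T}" using dn T0 by simp
        show "(\<lambda>t. l/2 + (norm (d t))\<^sup>2 / (2*l)) integrable_on {0..T}"
          by (intro integrable_add integrable_const_ivl integrable_on_divide d2i)
        fix t assume "t \<in> {0..T}"
        have "0 \<le> (norm (d t) - l)\<^sup>2" by simp
        then have "2 * l * norm (d t) \<le> l * l + (norm (d t))\<^sup>2" by (simp add: power2_eq_square algebra_simps)
        then show "norm (d t) \<le> l/2 + (norm (d t))\<^sup>2 / (2*l)" using l by (simp add: field_simps)
      qed
      also have "\<dots> = T/2 * l + X / (2*l)"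
      proof -
        have "integral {0..T} (\<lambda>t. l/2 + (norm (d t))\<^sup>2 / (2*l))
          = integral {0..T} (\<lambda>t. l/2) + integral {0..T} (\<lambda>t. (norm (d t))\<^sup>2 / (2*l))"
          by (rule integral_add) (intro integrable_const_ivl integrable_on_divide d2i)+
        moreover have "integral {0..T} (\<lambda>t. (norm (d t))\<^sup>2 / (2*l)) = X / (2*l)"
          unfolding X_def by (rule integral_divide)
        ultimately show ?thesis using T0 by simp
      qed
      finally show "V \<le> T/2 * l + X / (2*l)" .
    qed
    then show ?thesis by simp
  qed
  have "integral {0..T} (\<lambda>t. (norm (v t))\<^sup>2) \<le> T * (1 + 1/\<delta>)\<^sup>2 * V\<^sup>2"
    using lhs by (simp add: power_mult_distrib mult.assoc)
  also have "\<dots> \<le> T * (1 + 1/\<delta>)\<^sup>2 * (T * X)"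
    by (rule mult_left_mono[OF VX]) (use T0 in simp)
  also have "\<dots> = (T * (1 + 1/\<delta>))\<^sup>2 * X" by (simp add: power2_eq_square)
  finally show ?thesis unfolding T_def X_def v_def d_def by simp
qed

lemma flow_neg_deriv:
  "((\<lambda>t. ap (flow A (-t)) x) has_vector_derivative - (A *v ap (flow A (-t)) x)) (at t within S)"
proof -
  have "((\<lambda>t. ap (flow A t) x) \<circ> uminus has_vector_derivative - 1 *\<^sub>R (A *v ap (flow A (-t)) x)) (at t within S)"
    by (rule vector_diff_chain_within[OF has_vector_derivative_minus[OF has_vector_derivative_id] flow_apply_deriv])
  then show ?thesis by (simp add: o_def)
qed

lemma kernel_W22:
  assumes x: "ap (flow A (2*pi)) x = x"
  shows "W22 (\<lambda>t. ap (flow A (-t)) x) (\<lambda>t. - (A *v ap (flow A (-t)) x)) (\<lambda>t. A *v (A *v ap (flow A (-t)) x))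
     \<and> (\<forall>t. cov_d1 A (\<lambda>t. ap (flow A (-t)) x) (\<lambda>t. - (A *v ap (flow A (-t)) x)) t = 0)"
proof -
  define u where "u t = ap (flow A (-t)) x" for t
  have cu: "continuous_on S u" for S
    unfolding u_def by (rule continuous_on_vector_derivative) (rule flow_neg_deriv)
  have cAAu: "continuous_on S (\<lambda>t. A *v (A *v u t))" for S
    by (intro bounded_linear.continuous_on[OF matrix_vector_mul_bounded_linear] cu)
  have per: "u (t + 2*pi) = u t" for t
  proof -
    have "ap (flow A (-2*pi)) x = ap (flow A (-2*pi)) (ap (flow A (2*pi)) x)" using x by simp
    also have "\<dots> = x"
    proof -
      have "flow A (-2*pi) * flow A (2*pi) = 1" using flow_inv(1)[of A "2*pi"] by simp
      then show ?thesis by (simp only: ap_mult[symmetric] ap_one)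
    qed
    finally have "ap (flow A (-2*pi)) x = x" .
    moreover have "flow A (- (t + 2*pi)) = flow A (-t) * flow A (-2*pi)"
      using flow_add[of A "-t" "-2*pi"] by (simp add: algebra_simps)
    ultimately show ?thesis unfolding u_def by simp
  qed
  have du: "(u has_vector_derivative - (A *v u t)) (at t within S)" for t S
    unfolding u_def by (rule flow_neg_deriv)
  have du1: "((\<lambda>t. - (A *v u t)) has_vector_derivative A *v (A *v u t)) (at t within S)" for t S
  proof -
    have "((\<lambda>t. A *v u t) has_vector_derivative A *v (- (A *v u t))) (at t within S)"
      by (rule bounded_linear.has_vector_derivative[OF matrix_vector_mul_bounded_linear du])
    then have "((\<lambda>t. - (A *v u t)) has_vector_derivative - (A *v (- (A *v u t)))) (at t within S)"
      by (rule has_vector_derivative_minus)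
    moreover have "A *v (- z) = - (A *v z)" for z :: "real^'a"
      using linear_neg[OF matrix_vector_mul_linear[of A]] by simp
    ultimately show ?thesis by simp
  qed
  have "W22 u (\<lambda>t. - (A *v u t)) (\<lambda>t. A *v (A *v u t))"
    unfolding W22_def
  proof (intro conjI allI impI)
    show "u (t + 2*pi) = u t" for t by (rule per)
    show "(u has_vector_derivative - (A *v u t)) (at t)" for t by (rule du)
    fix a b :: real assume ab: "a \<le> b"
    show "(\<lambda>t. A *v (A *v u t)) absolutely_integrable_on {a..b}"
      by (rule absolutely_integrable_continuous_real[OF cAAu])
    have "((\<lambda>t. A *v (A *v u t)) has_integral (- (A *v u b) - - (A *v u a))) {a..b}"
      by (rule fundamental_theorem_of_calculus[OF ab]) (use du1 in auto)
    then show "- (A *v u b) - - (A *v u a) = integral {a..b} (\<lambda>t. A *v (A *v u t))"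
      by (simp add: integral_unique)
  next
    show "(\<lambda>t. (norm (A *v (A *v u t)))\<^sup>2) integrable_on {0..2*pi}"
      by (intro integrable_continuous_interval continuous_intros cAAu)
  qed
  moreover have "\<forall>t. cov_d1 A u (\<lambda>t. - (A *v u t)) t = 0"
    by (simp add: cov_d1_def)
  ultimately show ?thesis unfolding u_def by simp
qed

lemma flow_neg_mat_deriv:
  "((\<lambda>t. flow A (-t)) has_vector_derivative - (flow A (-t) * mofm A)) (at t within S)"
proof -
  have "(flow A \<circ> uminus has_vector_derivative - 1 *\<^sub>R (flow A (-t) * mofm A)) (at t within S)"
    by (rule vector_diff_chain_within[OF has_vector_derivative_minus[OF has_vector_derivative_id] flow_deriv_right])
  then show ?thesis by (simp add: o_def)
qed

lemma agree_flow:
  assumes hA: "\<And>z. ap (flow \<alpha> (2*pi)) z = z \<Longrightarrow> A *v z = \<alpha> *v z"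
    and x: "ap (flow \<alpha> (2*pi)) x = x"
  shows "ap (flow A t) x = ap (flow \<alpha> t) x"
proof -
  define z where "z t = ap (flow \<alpha> t) x" for t
  have zF: "ap (flow \<alpha> (2*pi)) (z t) = z t" for t
  proof -
    have "ap (flow \<alpha> (2*pi)) (z t) = ap (flow \<alpha> (2*pi) * flow \<alpha> t) x" by (simp add: z_def)
    also have "\<dots> = ap (flow \<alpha> t * flow \<alpha> (2*pi)) x" by (simp only: flow_commute)
    also have "\<dots> = z t" using x by (simp add: z_def)
    finally show ?thesis .
  qed
  define G where "G t = ap (flow A (-t)) (z t)" for t
  have G': "(G has_vector_derivative 0) (at t)" for t
  proof -
    have "(G has_vector_derivative ap (flow A (-t)) (\<alpha> *v z t) + ap (- (flow A (-t) * mofm A)) (z t)) (at t)"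
      unfolding G_def z_def
      by (rule bounded_bilinear.has_vector_derivative[OF bounded_bilinear_ap flow_neg_mat_deriv flow_apply_deriv])
    moreover have "ap (flow A (-t)) (\<alpha> *v z t) + ap (- (flow A (-t) * mofm A)) (z t) = 0"
      using hA[OF zF[of t]] by simp
    ultimately show ?thesis by simp
  qed
  have "G t = G 0"
    by (rule has_derivative_zero_unique[of UNIV]) (use G' in \<open>auto simp: has_vector_derivative_def\<close>)
  then have "ap (flow A (-t)) (z t) = x" by (simp add: G_def z_def)
  then have "ap (flow A t) (ap (flow A (-t)) (z t)) = ap (flow A t) x" by simp
  moreover have "ap (flow A t) (ap (flow A (-t)) (z t)) = z t"
    by (simp only: ap_mult[symmetric] flow_inv(2) ap_one)
  ultimately show ?thesis by (simp add: z_def)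
qed

lemma gap_exists:
  fixes M :: "'k::finite mat"
  obtains \<delta> where "\<delta> > 0"
    "\<And>z. (\<And>x. ap M x = x \<Longrightarrow> z \<bullet> x = 0) \<Longrightarrow> \<delta> * norm z \<le> norm (ap M z - z)"
proof -
  define Fp where "Fp = (\<Inter>x\<in>{x. ap M x = x}. {z. x \<bullet> z = 0})"
  define S where "S = sphere (0::real^'k) 1 \<inter> Fp"
  have cS: "compact S" unfolding S_def Fp_def
    by (intro compact_Int_closed compact_sphere closed_INT ballI closed_hyperplane)
  have inFp: "z \<in> Fp \<longleftrightarrow> (\<forall>x. ap M x = x \<longrightarrow> z \<bullet> x = 0)" for z
    unfolding Fp_def by (auto simp: inner_commute)
  have scale: "c *\<^sub>R z \<in> Fp" if "z \<in> Fp" for c z using that by (auto simp: inFp)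
  define f where "f z = norm (ap M z - z)" for z
  have fs: "f (c *\<^sub>R z) = \<bar>c\<bar> * f z" for c z
  proof -
    have "ap M (c *\<^sub>R z) - c *\<^sub>R z = c *\<^sub>R (ap M z - z)" by (simp add: algebra_simps)
    then show ?thesis by (simp add: f_def)
  qed
  show ?thesis
  proof (cases "S = {}")
    case True
    show ?thesis
    proof (rule that[of 1])
      fix z assume z: "\<And>x. ap M x = x \<Longrightarrow> z \<bullet> x = 0"
      have "z = 0"
      proof (rule ccontr)
        assume "z \<noteq> 0"
        then have "z /\<^sub>R norm z \<in> S" unfolding S_def using z by (auto simp: inFp)
        then show False using True by simp
      qed
      then show "1 * norm z \<le> norm (ap M z - z)" by simp
    qed simp
  next
    case False
    have cf: "continuous_on S f" unfolding f_def
      by (intro continuous_intros bounded_linear.continuous_on[OF bounded_linear_ap])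
    obtain z0 where z0: "z0 \<in> S" "\<And>y. y \<in> S \<Longrightarrow> f z0 \<le> f y"
      using continuous_attains_inf[OF cS False cf] by blast
    have pos: "f z0 > 0"
    proof (rule ccontr)
      assume "\<not> f z0 > 0"
      then have "ap M z0 = z0" by (simp add: f_def)
      then have "z0 \<bullet> z0 = 0" using z0(1) unfolding S_def by (auto simp: inFp)
      then have "z0 = 0" by simp
      then show False using z0(1) unfolding S_def by simp
    qed
    show ?thesis
    proof (rule that[OF pos])
      fix z assume z: "\<And>x. ap M x = x \<Longrightarrow> z \<bullet> x = 0"
      show "f z0 * norm z \<le> norm (ap M z - z)"
      proof (cases "z = 0")
        case True then show ?thesis by simp
      next
        case False
        then have "z /\<^sub>R norm z \<in> S" unfolding S_def using z by (auto simp: inFp)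
        then have "f z0 \<le> f (z /\<^sub>R norm z)" by (rule z0(2))
        also have "\<dots> = f z / norm z" by (simp add: fs divide_inverse_commute)
        finally show ?thesis using False by (simp add: field_simps f_def)
      qed
    qed
  qed
qed

lemma mofm_tendsto:
  assumes "as \<longlonglongrightarrow> \<alpha>"
  shows "(\<lambda>n. norm (mofm (as n) - mofm \<alpha>)) \<longlonglongrightarrow> 0"
proof (rule tendsto_sandwich[of "\<lambda>n. 0"])
  show "\<forall>\<^sub>F n in sequentially. 0 \<le> norm (mofm (as n) - mofm \<alpha>)" by simp
  show "\<forall>\<^sub>F n in sequentially. norm (mofm (as n) - mofm \<alpha>) \<le> (\<Sum>i\<in>UNIV. \<Sum>j\<in>UNIV. \<bar>(as n - \<alpha>) $ i $ j\<bar>)"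
  proof (rule always_eventually, rule allI)
    fix n
    show "norm (mofm (as n) - mofm \<alpha>) \<le> (\<Sum>i\<in>UNIV. \<Sum>j\<in>UNIV. \<bar>(as n - \<alpha>) $ i $ j\<bar>)"
      unfolding mofm_diff by (rule norm_mofm_le)
  qed
  have "(\<lambda>n. as n - \<alpha>) \<longlonglongrightarrow> 0" using assms by (rule LIM_zero)
  then have h0: "(\<lambda>n. \<bar>(as n - \<alpha>) $ i $ j\<bar>) \<longlonglongrightarrow> 0" for i j
  proof -
    have "(\<lambda>n. (as n - \<alpha>) $ i $ j) \<longlonglongrightarrow> 0"
      using tendsto_vec_nth[where i=j, OF tendsto_vec_nth[where i=i, OF \<open>(\<lambda>n. as n - \<alpha>) \<longlonglongrightarrow> 0\<close>]]
      by simp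
    then show ?thesis by (rule tendsto_rabs_zero)
  qed
  have h1: "(\<lambda>n. \<Sum>j\<in>UNIV. \<bar>(as n - \<alpha>) $ i $ j\<bar>) \<longlonglongrightarrow> 0" for i
    using tendsto_sum[of UNIV "\<lambda>j n. \<bar>(as n - \<alpha>) $ i $ j\<bar>" "\<lambda>j. 0"] h0 by simp
  show "(\<lambda>n. \<Sum>i\<in>UNIV. \<Sum>j\<in>UNIV. \<bar>(as n - \<alpha>) $ i $ j\<bar>) \<longlonglongrightarrow> 0"
    using tendsto_sum[of UNIV "\<lambda>i n. \<Sum>j\<in>UNIV. \<bar>(as n - \<alpha>) $ i $ j\<bar>" "\<lambda>i. 0"] h1 by simp
qed simp

lemma cos2_int: "((\<lambda>t. (cos t)\<^sup>2) has_integral pi) {0..2*pi}"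
proof -
  have d: "((\<lambda>t. (t + sin t * cos t) / 2) has_real_derivative (cos t)\<^sup>2) (at t)" for t
  proof -
    have h: "sin t * sin t + cos t * cos t = 1"
      using sin_cos_squared_add[of t] by (simp add: power2_eq_square)
    then have "2 - sin t * sin t * 2 = 2 * (cos t * cos t)" by linarith
    then show ?thesis
      by (auto intro!: derivative_eq_intros simp: power2_eq_square)
  qed
  have "((\<lambda>t. (cos t)\<^sup>2) has_integral ((2*pi + sin (2*pi) * cos (2*pi)) / 2 - (0 + sin 0 * cos 0) / 2)) {0..2*pi}"
    by (rule fundamental_theorem_of_calculus)
      (use d in \<open>auto simp: has_real_derivative_iff_has_vector_derivative intro: has_vector_derivative_at_within\<close>)
  then show ?thesis by simp
qed

lemma pc_bdd:
  fixes A :: "real^'k::finite^'k"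
  assumes skA: "skew A"
  shows "bdd_below {C. \<forall>u u1 u2. W22 u u1 u2 \<longrightarrow>
      integral {0..2*pi} (\<lambda>t. (norm (cov_d1 A u u1 t))\<^sup>2)
        \<le> C * integral {0..2*pi} (\<lambda>t. (norm (cov_d2 A u u1 u2 t))\<^sup>2)}"
proof (rule bdd_belowI[of _ 0])
  fix C assume "C \<in> {C. \<forall>u u1 u2. W22 u u1 u2 \<longrightarrow>
      integral {0..2*pi} (\<lambda>t. (norm (cov_d1 A u u1 t))\<^sup>2)
        \<le> C * integral {0..2*pi} (\<lambda>t. (norm (cov_d2 A u u1 u2 t))\<^sup>2)}"
  then have hC: "\<And>u u1 u2. W22 u u1 u2 \<Longrightarrow>
      integral {0..2*pi} (\<lambda>t. (norm (cov_d1 A u u1 t))\<^sup>2)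
        \<le> C * integral {0..2*pi} (\<lambda>t. (norm (cov_d2 A u u1 u2 t))\<^sup>2)" by blast
  obtain i :: 'k where True by simp
  define e :: "real^'k" where "e = axis i 1"
  have e1: "e \<bullet> e = 1" unfolding e_def by (simp add: inner_axis_axis)
  define u where "u t = sin t *\<^sub>R e" for t
  define u1 where "u1 t = cos t *\<^sub>R e" for t
  define u2 where "u2 t = - (sin t *\<^sub>R e)" for t
  have du: "(u has_vector_derivative u1 t) (at t within S)" for t S
  proof -
    have "(u has_vector_derivative cos t *\<^sub>R e) (at t within S)"
      unfolding u_def by (intro derivative_eq_intros) auto
    then show ?thesis by (simp add: u1_def)
  qed
  have du1: "(u1 has_vector_derivative u2 t) (at t within S)" for t S
  proof -
    have "(u1 has_vector_derivative (- sin t) *\<^sub>R e) (at t within S)"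
      unfolding u1_def by (intro derivative_eq_intros) auto
    then show ?thesis by (simp add: u2_def)
  qed
  have cu2: "continuous_on S u2" for S unfolding u2_def by (intro continuous_intros)
  have W: "W22 u u1 u2"
    unfolding W22_def
  proof (intro conjI allI impI)
    show "u (t + 2*pi) = u t" for t unfolding u_def by (simp add: sin_periodic)
    show "(u has_vector_derivative u1 t) (at t)" for t by (rule du)
    fix a b :: real assume ab: "a \<le> b"
    show "u2 absolutely_integrable_on {a..b}" by (rule absolutely_integrable_continuous_real[OF cu2])
    have "(u2 has_integral (u1 b - u1 a)) {a..b}"
      by (rule fundamental_theorem_of_calculus[OF ab]) (use du1 in auto)
    then show "u1 b - u1 a = integral {a..b} u2" by (simp add: integral_unique)
  next
    show "(\<lambda>t. (norm (u2 t))\<^sup>2) integrable_on {0..2*pi}"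
      by (intro integrable_continuous_interval continuous_intros cu2)
  qed
  have L: "pi \<le> integral {0..2*pi} (\<lambda>t. (norm (cov_d1 A u u1 t))\<^sup>2)"
  proof -
    have "integral {0..2*pi} (\<lambda>t. (cos t)\<^sup>2) \<le> integral {0..2*pi} (\<lambda>t. (norm (cov_d1 A u u1 t))\<^sup>2)"
    proof (rule integral_le)
      show "(\<lambda>t. (cos t)\<^sup>2) integrable_on {0..2*pi}" using cos2_int by blast
      show "(\<lambda>t. (norm (cov_d1 A u u1 t))\<^sup>2) integrable_on {0..2*pi}"
        unfolding cov_d1_def u_def u1_def
        by (intro integrable_continuous_interval continuous_intros
            bounded_linear.continuous_on[OF matrix_vector_mul_bounded_linear])
      fix t assume "t \<in> {0..2*pi}"
      have eq: "cov_d1 A u u1 t = cos t *\<^sub>R e + sin t *\<^sub>R (A *v e)"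
        unfolding cov_d1_def u_def u1_def by (simp add: matrix_vector_mult_scaleR)
      have "(norm (cov_d1 A u u1 t))\<^sup>2 = (cos t)\<^sup>2 * (e \<bullet> e) + 2 * (cos t * sin t) * (e \<bullet> (A *v e))
          + (sin t)\<^sup>2 * ((A *v e) \<bullet> (A *v e))"
        unfolding eq power2_norm_eq_inner
        by (simp add: inner_add_left inner_add_right inner_commute power2_eq_square algebra_simps)
      also have "\<dots> = (cos t)\<^sup>2 + (sin t)\<^sup>2 * ((A *v e) \<bullet> (A *v e))"
        using e1 skew_inner[OF skA, of e] by simp
      also have "\<dots> \<ge> (cos t)\<^sup>2" by simp
      finally show "(cos t)\<^sup>2 \<le> (norm (cov_d1 A u u1 t))\<^sup>2" .
    qed
    then show ?thesis using cos2_int by (simp add: integral_unique)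
  qed
  have R: "0 \<le> integral {0..2*pi} (\<lambda>t. (norm (cov_d2 A u u1 u2 t))\<^sup>2)"
  proof (cases "(\<lambda>t. (norm (cov_d2 A u u1 u2 t))\<^sup>2) integrable_on {0..2*pi}")
    case True
    then show ?thesis by (rule integral_nonneg) simp
  next
    case False
    then show ?thesis by (simp add: not_integrable_integral)
  qed
  show "0 \<le> C"
  proof (rule ccontr)
    assume "\<not> 0 \<le> C"
    then have "C * integral {0..2*pi} (\<lambda>t. (norm (cov_d2 A u u1 u2 t))\<^sup>2) \<le> 0"
      using R by (simp add: mult_nonpos_nonneg)
    then show False using hC[OF W] L pi_gt_zero by linarith
  qed
qed

theorem lemma4p5:
  fixes as :: "nat \<Rightarrow> real^'k^'k" and \<alpha> :: "real^'k^'k"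
  assumes "\<And>n. skew (as n)" and "skew \<alpha>"
    and "as \<longlonglongrightarrow> \<alpha>"
    and "non_degenerating as \<alpha>"
  shows "\<exists>N B. \<forall>n\<ge>N. poincare_const (as n) \<le> B"
proof -
  note sk = assms(1) and ska = assms(2)
  define M where "M = flow \<alpha> (2*pi)"
  define F where "F = {x. ap M x = x}"
  obtain N0 where N0: "\<And>u u1 u2 n t. W22 u u1 u2 \<Longrightarrow> (\<forall>t. cov_d1 \<alpha> u u1 t = 0) \<Longrightarrow> n \<ge> N0
      \<Longrightarrow> cov_d1 (as n) u u1 t = 0"
    using assms(4) unfolding non_degenerating_def by blast
  have hA: "as n *v z = \<alpha> *v z" if n: "n \<ge> N0" and z: "ap (flow \<alpha> (2*pi)) z = z" for n z
  proof -
    note k = kernel_W22[OF z]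
    have "cov_d1 (as n) (\<lambda>t. ap (flow \<alpha> (-t)) z) (\<lambda>t. - (\<alpha> *v ap (flow \<alpha> (-t)) z)) 0 = 0"
      by (rule N0[OF conjunct1[OF k] conjunct2[OF k] n])
    then show ?thesis by (simp add: cov_d1_def)
  qed
  have fixn: "ap (flow (as n) (2*pi)) x = x" if n: "n \<ge> N0" and x: "x \<in> F" for n x
  proof -
    have "ap M x = x" using x by (simp add: F_def)
    then have x': "ap (flow \<alpha> (2*pi)) x = x" by (simp add: M_def)
    have "ap (flow (as n) (2*pi)) x = ap (flow \<alpha> (2*pi)) x"
      by (rule agree_flow[OF hA[OF n] x'])
    then show ?thesis using x' by simp
  qed
  have subF: "subspace F"
    unfolding F_def subspace_def by (auto simp: algebra_simps)
  obtain P where P: "bounded_linear P" "\<And>x. P x \<in> F"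
    "\<And>x z. z \<in> F \<Longrightarrow> (x - P x) \<bullet> z = 0"
    "\<And>z. (\<And>x. x \<in> F \<Longrightarrow> z \<bullet> x = 0) \<Longrightarrow> P z = 0"
    "\<And>x. norm (P x) \<le> norm x"
    using proj_exists[OF subF] by metis
  obtain \<delta> where d0: "\<delta> > 0"
    and gap: "\<And>z. (\<And>x. ap M x = x \<Longrightarrow> z \<bullet> x = 0) \<Longrightarrow> \<delta> * norm z \<le> norm (ap M z - z)"
    using gap_exists[of M] by metis
  have "\<forall>\<^sub>F n in sequentially. norm (mofm (as n) - mofm \<alpha>) < \<delta> / (4 * pi)"
    using mofm_tendsto[OF assms(3)] d0 by (simp add: order_tendsto_iff)
  then obtain N1 where N1: "\<And>n. n \<ge> N1 \<Longrightarrow> norm (mofm (as n) - mofm \<alpha>) < \<delta> / (4 * pi)"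
    unfolding eventually_sequentially by blast
  define B where "B = ((2*pi) * (1 + 1/(\<delta>/2)))\<^sup>2"
  have "poincare_const (as n) \<le> B" if n: "n \<ge> max N0 N1" for n
  proof -
    have nM: "norm (flow (as n) (2*pi) - M) \<le> \<delta> / 2"
    proof -
      have "norm (flow (as n) (2*pi) - M) \<le> 2*pi * norm (mofm (as n) - mofm \<alpha>)"
        unfolding M_def by (rule flow_close[OF sk ska]) simp
      also have "\<dots> \<le> 2*pi * (\<delta> / (4 * pi))"
        using N1[of n] n by (intro mult_left_mono) auto
      also have "\<dots> = \<delta> / 2" by simp
      finally show ?thesis .
    qed
    have gapn: "\<delta>/2 * norm z \<le> norm (ap (flow (as n) (2*pi)) z - z)"
      if z: "\<And>x. x \<in> F \<Longrightarrow> z \<bullet> x = 0" for z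
    proof -
      have g: "\<delta> * norm z \<le> norm (ap M z - z)" by (rule gap) (use z in \<open>auto simp: F_def\<close>)
      have "ap M z - z = (ap (flow (as n) (2*pi)) z - z) - ap (flow (as n) (2*pi) - M) z" by simp
      then have "norm (ap M z - z) \<le> norm (ap (flow (as n) (2*pi)) z - z) + norm (ap (flow (as n) (2*pi) - M) z)"
        by (metis norm_triangle_ineq4)
      also have "norm (ap (flow (as n) (2*pi) - M) z) \<le> norm (flow (as n) (2*pi) - M) * norm z"
        by (rule ap_norm)
      also have "\<dots> \<le> \<delta>/2 * norm z" by (rule mult_right_mono[OF nM]) simp
      finally show ?thesis using g by simp
    qed
    have mem: "B \<in> {C. \<forall>u u1 u2. W22 u u1 u2 \<longrightarrow>
      integral {0..2*pi} (\<lambda>t. (norm (cov_d1 (as n) u u1 t))\<^sup>2)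
        \<le> C * integral {0..2*pi} (\<lambda>t. (norm (cov_d2 (as n) u u1 u2 t))\<^sup>2)}"
    proof (intro CollectI allI impI)
      fix u u1 u2 :: "real \<Rightarrow> real^'k" assume W: "W22 u u1 u2"
      show "integral {0..2*pi} (\<lambda>t. (norm (cov_d1 (as n) u u1 t))\<^sup>2)
        \<le> B * integral {0..2*pi} (\<lambda>t. (norm (cov_d2 (as n) u u1 u2 t))\<^sup>2)"
        unfolding B_def
        by (rule pc_bound[OF sk _ fixn gapn P W]) (use d0 n in auto)
    qed
    show ?thesis
      unfolding poincare_const_def by (rule cInf_lower[OF mem pc_bdd[OF sk]])
  qed
  then show ?thesis by blast
qed

end
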